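(* Let $V$ be a space. (i) $V$ is CM if and only if $V$ is homothetic to $\mathbb{Q}(\sqrt{-d})$ for some squarefree positive integer $d$. (ii) For a squarefree positive integer $d\neq 1,3$, the rational angles in $\mathbb{Q}(\sqrt{-d})$ are, up to equivalence, precisely those of the form $(v,\sqrt{-d}\,v)$ with $v\in\mathbb{Q}(\sqrt{-d})\setminus\{0\}$. (iii) The rational angles in $\mathbb{Q}(i)$ are, up to equivalence, precisely those of the form $(v,\lambda v)$ with $v\in\mathbb{Q}(i)\setminus\{0\}$ and $\lambda\in\{i,i+1,i-1\}$. (iv) The rational angles in $\mathbb{Q}(\sqrt{-3})$ are, up to equivalence, precisely those of the form $(v,\lambda v)$ with $v\in\mathbb{Q}(\sqrt{-3})\setminus\{0\}$ and $\lambda\in\{\sqrt{-3},\zeta,\zeta-1,\zeta+1,\zeta+2\}$, where $\zeta=\frac{-1+\sqrt{-3}}{2}$.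
   Context: A space is a $2$-dimensional $\mathbb{Q}$-vector subspace $V\subset\mathbb{C}$ containing two $\mathbb{R}$-linearly independent vectors. Spaces $V_1,V_2$ are homothetic if $V_2=\lambda V_1$ for some $\lambda\in\mathbb{C}^*$. $V$ is CM (has complex multiplication) if there is $\lambda\in\mathbb{C}\setminus\mathbb{Q}$ with $\lambda V\subseteq V$. A rational angle of $V$ is an ordered pair of distinct lines $(\mathbb{R}v_1,\mathbb{R}v_2)$, written $(v_1,v_2)$, with $v_1,v_2\in V\setminus\{0\}$, $v_2/v_1\notin\mathbb{R}$ and $\arg(v_2/v_1)\in\mathbb{Q}\pi$. Two rational angles are equivalent if one is obtained from the other by swapping the two lines. *)

theory Defs
  imports "HOL-Analysis.Analysis" "HOL-Computational_Algebra.Squarefree"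
begin

definition is_space :: "complex set \<Rightarrow> bool" where
  "is_space V \<longleftrightarrow>
     (\<exists>a b. a \<in> V \<and> b \<in> V \<and>
        (\<forall>p q :: rat. of_rat p * a + of_rat q * b = 0 \<longrightarrow> p = 0 \<and> q = 0) \<and>
        V = {of_rat p * a + of_rat q * b | p q :: rat. True}) \<and>
     (\<exists>u w. u \<in> V \<and> w \<in> V \<and>
        (\<forall>r s :: real. of_real r * u + of_real s * w = 0 \<longrightarrow> r = 0 \<and> s = 0))"

definition homothetic :: "complex set \<Rightarrow> complex set \<Rightarrow> bool" where
  "homothetic V1 V2 \<longleftrightarrow> (\<exists>l. l \<noteq> 0 \<and> V2 = (\<lambda>v. l * v) ` V1)"

definition is_CM :: "complex set \<Rightarrow> bool" where
  "is_CM V \<longleftrightarrow> (\<exists>l. l \<notin> \<rat> \<and> (\<lambda>v. l * v) ` V \<subseteq> V)"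

definition sqrt_neg :: "nat \<Rightarrow> complex" where
  "sqrt_neg d = \<i> * of_real (sqrt (real d))"

definition Qsqrt_neg :: "nat \<Rightarrow> complex set" where
  "Qsqrt_neg d = {of_rat p + of_rat q * sqrt_neg d | p q :: rat. True}"

definition rline :: "complex \<Rightarrow> complex set" where
  "rline v = {of_real r * v | r :: real. True}"

definition rational_angle :: "complex set \<Rightarrow> complex set \<times> complex set \<Rightarrow> bool" where
  "rational_angle V A \<longleftrightarrow>
     (\<exists>v1 v2. v1 \<in> V - {0} \<and> v2 \<in> V - {0} \<and> v2 / v1 \<notin> \<real> \<and>
        Arg (v2 / v1) / pi \<in> \<rat> \<and> A = (rline v1, rline v2))"

definition angle_equiv :: "complex set \<times> complex set \<Rightarrow> complex set \<times> complex set \<Rightarrow> bool" where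
  "angle_equiv A B \<longleftrightarrow> A = B \<or> A = (snd B, fst B)"

definition angles_given_by :: "complex set \<Rightarrow> complex set \<Rightarrow> bool" where
  "angles_given_by V L \<longleftrightarrow>
     (\<forall>A. rational_angle V A \<longleftrightarrow>
        (\<exists>v \<in> V - {0}. \<exists>l \<in> L. angle_equiv A (rline v, rline (l * v))))"

end

theory Submission
  imports Defs
begin


lemma arg_rat_imp_pow:
  assumes "z \<noteq> 0" "Arg z / pi \<in> \<rat>"
  shows "\<exists>n>0. z ^ n \<in> \<real>"
proof -
  obtain a b where b: "b > 0" "Arg z / pi = of_int a / of_int b"
    using Rats_cases'[OF assms(2)] by metis
  have A: "Arg z = of_int a * pi / of_int b" using b pi_gt_zero
    by (simp add: field_simps)
  define n where "n = nat b"
  have n: "n > 0" "real n = of_int b" using b by (auto simp: n_def)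
  have "z ^ n = rcis (cmod z ^ n) (real n * Arg z)"
    by (metis DeMoivre2 rcis_cmod_Arg)
  also have "real n * Arg z = of_int a * pi" using n b A by simp
  finally have "Im (z ^ n) = 0"
    by (simp add: rcis_def sin_zero_iff_int2)
  then show ?thesis using n complex_is_Real_iff by blast
qed

lemma pow_imp_arg_rat:
  assumes "z \<noteq> 0" "n > 0" "z ^ n \<in> \<real>"
  shows "Arg z / pi \<in> \<rat>"
proof -
  have "z ^ n = rcis (cmod z ^ n) (real n * Arg z)"
    by (metis DeMoivre2 rcis_cmod_Arg)
  then have "Im (z ^ n) = cmod z ^ n * sin (real n * Arg z)"
    by (simp add: rcis_def)
  then have "sin (real n * Arg z) = 0" using assms complex_is_Real_iff by simp
  then obtain i :: int where "real n * Arg z = of_int i * pi" using sin_zero_iff_int2 by blast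
  then have "Arg z / pi = of_int i / of_nat n" using assms(2) pi_gt_zero by (simp add: field_simps)
  then show ?thesis by simp
qed

lemma nat_rat_square:
  assumes "of_nat N = (r::rat)^2"
  shows "\<exists>k::nat. N = k^2"
proof -
  obtain a b where ab: "quotient_of r = (a,b)" by force
  have b: "b > 0" using quotient_of_denom_pos[OF ab] .
  have cop: "coprime a b" using quotient_of_coprime[OF ab] .
  have r: "r = of_int a / of_int b" using quotient_of_div[OF ab] .
  have "of_nat N * (of_int b)^2 = (of_int a :: rat)^2" using assms b r by (simp add: field_simps)
  then have e: "int N * b^2 = a^2"
    by (metis (mono_tags) of_int_eq_iff of_int_mult of_int_of_nat_eq of_int_power)
  then have "b^2 dvd a^2" by (metis dvd_triv_right)
  moreover have "coprime (b^2) (a^2)" using cop by (simp add: coprime_commute)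
  ultimately have "is_unit (b^2)" by (meson coprime_common_divisor dvd_refl)
  then have "b^2 = 1" by simp
  then have "b = 1" using b by (auto simp: power2_eq_1_iff)
  then have "int N = a^2" using e by simp
  then have "int N = (int (nat \<bar>a\<bar>))^2" by simp
  then have "N = (nat \<bar>a\<bar>)^2" by (simp only: of_nat_power[symmetric] of_nat_eq_iff)
  then show ?thesis by blast
qed

lemma sqf_square: assumes "squarefree (d::nat)" "d = k^2" shows "d = 1"
proof -
  have "k^2 dvd d" using assms by simp
  then have "is_unit k" using assms(1) squarefree_def by blast
  then show ?thesis using assms by simp
qed

lemma sqf_3square: assumes "squarefree (d::nat)" "3 * d = k^2" shows "d = 3"
proof -
  have p: "prime (3::nat)" by simp
  have "3 dvd k^2" using assms by (metis dvd_triv_left)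
  then have "3 dvd k" using p prime_dvd_power by blast
  then obtain j where "k = 3 * j" by blast
  then have "d = 3 * j^2" using assms by (simp add: power2_eq_square)
  then have "j^2 dvd d" by simp
  then have "is_unit j" using assms(1) squarefree_def by blast
  then show ?thesis using \<open>d = 3 * j^2\<close> by simp
qed



lemma of_rat_complex: "(of_rat x :: complex) = complex_of_real (of_rat x)"
  by (cases x) (simp add: of_rat_rat)

lemma Re_of_rat[simp]: "Re (of_rat x) = of_rat x"
  by (simp add: of_rat_complex)
lemma Im_of_rat[simp]: "Im (of_rat x) = 0"
  by (simp add: of_rat_complex)

lemma coprime_step:
  fixes a q b :: int
  assumes "coprime a q" shows "coprime (a - q^2 * b) q"
proof (rule coprimeI)
  fix c assume c: "c dvd a - q^2 * b" "c dvd q"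
  then have "c dvd q^2 * b" by (simp add: power2_eq_square)
  then have "c dvd a" using c(1) by (metis diff_add_cancel dvd_add)
  then show "is_unit c" using assms c(2) coprime_common_divisor by blast
qed

definition emb :: "nat \<Rightarrow> rat \<Rightarrow> rat \<Rightarrow> complex" where
  "emb d x y = of_rat x + of_rat y * sqrt_neg d"

lemma Re_emb[simp]: "Re (emb d x y) = of_rat x"
  by (simp add: emb_def sqrt_neg_def)
lemma Im_emb[simp]: "Im (emb d x y) = of_rat y * sqrt (real d)"
  by (simp add: emb_def sqrt_neg_def)

lemma Qsqrt_mem: "z \<in> Qsqrt_neg d \<longleftrightarrow> (\<exists>x y. z = emb d x y)"
  by (auto simp: Qsqrt_neg_def emb_def)

lemma emb_in[simp]: "emb d x y \<in> Qsqrt_neg d"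
  by (auto simp: Qsqrt_mem)

lemma emb_mult: "emb d a b * emb d c e = emb d (a*c - of_nat d * b*e) (a*e + b*c)"
proof -
  have s: "sqrt (real d) * sqrt (real d) = real d" by simp
  show ?thesis
    by (simp add: complex_eq_iff of_rat_mult of_rat_diff of_rat_add algebra_simps)
       (simp add: mult.assoc[symmetric] s)?
qed

lemma emb_eq_iff: assumes "d > 0"
  shows "emb d a b = emb d c e \<longleftrightarrow> a = c \<and> b = e"
  using assms by (auto simp: complex_eq_iff)

lemma emb_real_iff: assumes "d > 0" shows "emb d x y \<in> \<real> \<longleftrightarrow> y = 0"
  using assms by (auto simp: complex_is_Real_iff)

lemma emb_zero_iff: assumes "d > 0" shows "emb d x y = 0 \<longleftrightarrow> x = 0 \<and> y = 0"
  using assms by (auto simp: complex_eq_iff)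

lemma emb_div:
  assumes "d > 0" "emb d c e \<noteq> 0"
  shows "emb d a b / emb d c e =
     emb d ((a*c + of_nat d * b*e)/(c^2 + of_nat d * e^2)) ((b*c - a*e)/(c^2 + of_nat d * e^2))"
proof -
  have ce: "c \<noteq> 0 \<or> e \<noteq> 0" using assms emb_zero_iff by auto
  have N: "c^2 + of_nat d * e^2 \<noteq> 0"
  proof
    assume "c^2 + of_nat d * e^2 = 0"
    moreover have "c^2 \<ge> 0" "of_nat d * e^2 \<ge> 0" by auto
    ultimately have "c^2 = 0" "of_nat d * e^2 = 0" by linarith+
    then show False using ce assms by auto
  qed
  define N where "N = c^2 + of_nat d * e^2"
  have N0: "N \<noteq> 0" using N by (simp add: N_def)
  have i1: "(a*c + of_nat d * b*e)*c - of_nat d*(b*c - a*e)*e = a*N"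
    by (simp add: N_def algebra_simps power2_eq_square)
  have i2: "(a*c + of_nat d * b*e)*e + (b*c - a*e)*c = b*N"
    by (simp add: N_def algebra_simps power2_eq_square)
  have j1: "(a*c + of_nat d * b*e)/N * c - of_nat d * ((b*c - a*e)/N) * e = a"
  proof -
    have "(a*c + of_nat d * b*e)/N * c - of_nat d * ((b*c - a*e)/N) * e
        = ((a*c + of_nat d * b*e)*c - of_nat d*(b*c - a*e)*e) / N"
      using N0 by (simp add: field_simps)
    then show ?thesis using i1 N0 by simp
  qed
  have j2: "(a*c + of_nat d * b*e)/N * e + (b*c - a*e)/N * c = b"
  proof -
    have "(a*c + of_nat d * b*e)/N * e + (b*c - a*e)/N * c
        = ((a*c + of_nat d * b*e)*e + (b*c - a*e)*c) / N"
      using N0 by (simp add: field_simps)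
    then show ?thesis using i2 N0 by simp
  qed
  have "emb d ((a*c + of_nat d * b*e)/N) ((b*c - a*e)/N) * emb d c e = emb d a b"
    unfolding emb_mult using j1 j2 by (simp add: mult.assoc)
  then show ?thesis using assms(2) by (simp add: N_def field_simps)
qed



fun rseq :: "rat \<Rightarrow> nat \<Rightarrow> rat" where
  "rseq c 0 = 2"
| "rseq c (Suc 0) = c"
| "rseq c (Suc (Suc k)) = c * rseq c (Suc k) - rseq c k"

fun mseq :: "int \<Rightarrow> int \<Rightarrow> nat \<Rightarrow> int" where
  "mseq p q 0 = 2"
| "mseq p q (Suc 0) = p"
| "mseq p q (Suc (Suc k)) = p * mseq p q (Suc k) - q^2 * mseq p q k"

lemma mseq_coprime: assumes "coprime p q" shows "coprime (mseq p q (Suc k)) q"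
proof (induction k)
  case 0 then show ?case using assms by simp
next
  case (Suc k)
  then have "coprime (p * mseq p q (Suc k)) q" using assms by simp
  then show ?case using coprime_step by simp
qed

lemma rseq_mseq: assumes "q \<noteq> 0"
  shows "rseq (of_int p / of_int q) k = of_int (mseq p q k) / of_int q ^ k"
proof -
  have "rseq (of_int p / of_int q) k = of_int (mseq p q k) / of_int q ^ k \<and>
        rseq (of_int p / of_int q) (Suc k) = of_int (mseq p q (Suc k)) / of_int q ^ (Suc k)"
  proof (induction k)
    case 0 then show ?case using assms by simp
  next
    case (Suc k)
    then show ?case using assms by (simp add: field_simps power2_eq_square)
  qed
  then show ?thesis by blast
qed

lemma rseq_trace:
  fixes w :: complex
  assumes "w * cnj w = 1" "w + cnj w = of_rat c"
  shows "of_rat (rseq c k) = w^k + cnj w^k"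
proof -
  have "of_rat (rseq c k) = w^k + cnj w^k \<and> of_rat (rseq c (Suc k)) = w^(Suc k) + cnj w^(Suc k)"
  proof (induction k)
    case 0 then show ?case using assms by simp
  next
    case (Suc k)
    have "of_rat (rseq c (Suc (Suc k))) = of_rat c * of_rat (rseq c (Suc k)) - of_rat (rseq c k)"
      by (simp add: of_rat_mult of_rat_diff)
    also have "\<dots> = (w + cnj w) * (w^(Suc k) + cnj w^(Suc k)) - (w * cnj w) * (w^k + cnj w^k)"
      using Suc assms by simp
    also have "\<dots> = w^(Suc (Suc k)) + cnj w^(Suc (Suc k))"
      by (simp add: algebra_simps)
    finally show ?case using Suc by simp
  qed
  then show ?thesis by blast
qed

lemma root_trace_int:
  fixes w :: complex
  assumes "w^n = 1" "n > 0" "w + cnj w = of_rat c"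
  shows "c \<in> \<int>"
proof -
  have "norm w ^ n = 1" using assms(1) by (metis norm_one norm_power)
  then have "norm w = 1" using assms(2) by (metis norm_ge_zero power_eq_1_iff zero_le_one
       power_eq_imp_eq_base power_one)
  then have wc: "w * cnj w = 1" by (metis complex_norm_square mult.commute of_real_1 power_one complex_cnj_mult ) 
  have "cnj w ^ n = 1" using assms(1) by (metis complex_cnj_one complex_cnj_power)
  then have "w^(Suc n) + cnj w^(Suc n) = w + cnj w" using assms(1) by simp
  then have "of_rat (rseq c (Suc n)) = (of_rat c :: complex)" using rseq_trace[OF wc assms(3)] assms(3) by simp
  then have rc: "rseq c (Suc n) = c" by simp
  obtain p q where pq: "quotient_of c = (p,q)" by force
  have q: "q > 0" using quotient_of_denom_pos[OF pq] .
  have cop: "coprime p q" using quotient_of_coprime[OF pq] .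
  have c: "c = of_int p / of_int q" using quotient_of_div[OF pq] .
  have "of_int (mseq p q (Suc n)) / of_int q ^ (Suc n) = (of_int p / of_int q :: rat)"
    using rc rseq_mseq[of q p "Suc n"] q c by simp
  then have "of_int (mseq p q (Suc n)) = (of_int p * of_int q ^ n :: rat)"
    using q by (simp add: field_simps)
  then have e: "mseq p q (Suc n) = p * q ^ n" by (metis of_int_eq_iff of_int_mult of_int_power)
  have "q dvd mseq p q (Suc n)" unfolding e using assms(2) by (simp add: dvd_power)
  moreover have "coprime (mseq p q (Suc n)) q" using mseq_coprime[OF cop] .
  ultimately have "is_unit q" by (meson coprime_common_divisor dvd_refl)
  then have "q = 1" using q by auto
  then show ?thesis using c by simp
qed



lemma classify:
  assumes d: "d > 0" "squarefree d" and y: "y \<noteq> 0" and n: "n > 0"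
    and zn: "(emb d x y)^n \<in> \<real>"
  shows "x = 0 \<or> (d = 1 \<and> (x = y \<or> x = -y)) \<or> (d = 3 \<and> (x = 3*y \<or> x = -3*y \<or> x = y \<or> x = -y))"
proof -
  define z where "z = emb d x y"
  have z0: "z \<noteq> 0" using emb_zero_iff[OF d(1)] y z_def by auto
  define M where "M = x^2 + of_nat d * y^2"
  have M0: "M > 0" using y d(1) by (simp add: M_def add_nonneg_pos)
  have zc: "z * cnj z = of_real (of_rat M)"
    using d(1) by (simp add: complex_mult_cnj z_def M_def of_rat_add of_rat_mult of_rat_power power_mult_distrib)
  have zz: "z^2 + cnj z^2 = of_real (of_rat (2 * (x^2 - of_nat d * y^2)))"
    using d(1) by (simp add: complex_eq_iff z_def of_rat_add of_rat_mult of_rat_power of_rat_diff power2_eq_square)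
  define w where "w = z / cnj z"
  have "w + cnj w = (z^2 + cnj z^2) / (z * cnj z)"
    using z0 by (simp add: w_def field_simps power2_eq_square)
  also have "\<dots> = of_rat (2 * (x^2 - of_nat d * y^2) / M)"
    unfolding zc zz using M0 by (simp add: of_rat_divide of_rat_complex)
  finally have wc: "w + cnj w = of_rat (2 * (x^2 - of_nat d * y^2) / M)" .
  have "cnj (z^n) = z^n" using zn z_def Reals_cnj_iff by blast
  then have "w^n = 1" using z0 by (simp add: w_def power_divide)
  then have cint: "2 * (x^2 - of_nat d * y^2) / M \<in> \<int>" using root_trace_int[OF _ n wc] by blast
  then obtain k where k: "2 * (x^2 - of_nat d * y^2) / M = of_int k" by (metis Ints_cases)
  then have kM: "of_int k * M = 2 * (x^2 - of_nat d * y^2)" using M0 by (simp add: field_simps)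
  have dy: "of_nat d * y^2 > 0" using d(1) y by simp
  have x2: "x^2 \<ge> 0" by simp
  have ineq: "\<And>X D::rat. D > 0 \<Longrightarrow> X \<ge> 0 \<Longrightarrow> 2*(X - D) < 3*(X+D) \<and> 2*(X - D) > -3*(X+D)"
    by (simp add: algebra_simps)
  have "2 * (x^2 - of_nat d * y^2) < 3 * M" unfolding M_def using ineq[OF dy x2] by blast
  moreover have "2 * (x^2 - of_nat d * y^2) > -3 * M" unfolding M_def using ineq[OF dy x2] by blast
  ultimately have "of_int k * M < 3 * M" "of_int k * M > -3 * M" using kM by simp_all
  then have "of_int k < (3::rat)" "of_int k > (-3::rat)" using M0
    by (auto intro: mult_right_less_imp_less)
  then have "k < 3" "k > -3" by linarith+
  then have "k = -2 \<or> k = -1 \<or> k = 0 \<or> k = 1 \<or> k = 2" by linarith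
  then show ?thesis
  proof (elim disjE)
    assume "k = 2" then show ?thesis using kM dy unfolding M_def by auto
  next
    assume "k = -2" then have "x^2 = 0" using kM dy unfolding M_def by simp
    then show ?thesis by simp
  next
    assume "k = 0" then have e: "x^2 = of_nat d * y^2" using kM unfolding M_def by simp
    then have "of_nat d = (x/y)^2" using y by (simp add: power_divide)
    then obtain j where "d = j^2" using nat_rat_square by blast
    then have "d = 1" using sqf_square d(2) by blast
    then have "x^2 = y^2" using e by simp
    then show ?thesis using \<open>d = 1\<close> by (simp add: power2_eq_iff)
  next
    assume "k = 1" then have e: "x^2 = 3 * of_nat d * y^2" using kM unfolding M_def by simp
    then have "of_nat (3*d) = (x/y)^2" using y by (simp add: power_divide)
    then obtain j where "3*d = j^2" using nat_rat_square by blast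
    then have "d = 3" using sqf_3square d(2) by blast
    then have "x^2 = (3*y)^2" using e by (simp add: power_mult_distrib)
    then have "x = 3*y \<or> x = -(3*y)" using power2_eq_iff by blast
    then show ?thesis using \<open>d = 3\<close> by auto
  next
    assume "k = -1" then have e: "3 * x^2 = of_nat d * y^2" using kM unfolding M_def by simp
    then have "of_nat (3*d) = (3*x/y)^2" using y by (simp add: power_divide power_mult_distrib field_simps)
    then obtain j where "3*d = j^2" using nat_rat_square by blast
    then have "d = 3" using sqf_3square d(2) by blast
    then have "x^2 = y^2" using e by simp
    then show ?thesis using \<open>d = 3\<close> by (simp add: power2_eq_iff)
  qed
qed



lemma rline_scale: assumes "r \<noteq> 0" shows "rline (of_real r * u) = rline u"
proof -
  have "rline (of_real r * u) \<subseteq> rline u"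
    by (auto simp: rline_def) (metis mult.assoc of_real_mult)
  moreover have "rline u \<subseteq> rline (of_real r * u)"
  proof
    fix x assume "x \<in> rline u"
    then obtain s where "x = of_real s * u" by (auto simp: rline_def)
    then have "x = of_real (s / r) * (of_real r * u)" using assms by (simp add: field_simps)
    then show "x \<in> rline (of_real r * u)" unfolding rline_def by blast
  qed
  ultimately show ?thesis by blast
qed

lemma Qsqrt_mult: "u \<in> Qsqrt_neg d \<Longrightarrow> v \<in> Qsqrt_neg d \<Longrightarrow> u * v \<in> Qsqrt_neg d"
proof -
  assume "u \<in> Qsqrt_neg d" "v \<in> Qsqrt_neg d"
  then obtain a b c e where "u = emb d a b" "v = emb d c e" by (auto simp: Qsqrt_mem)
  then show ?thesis by (simp add: emb_mult)
qed

lemma Qsqrt_div: "d > 0 \<Longrightarrow> u \<in> Qsqrt_neg d \<Longrightarrow> v \<in> Qsqrt_neg d \<Longrightarrow> v \<noteq> 0 \<Longrightarrow> u / v \<in> Qsqrt_neg d"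
proof -
  assume "d > 0" "u \<in> Qsqrt_neg d" "v \<in> Qsqrt_neg d" "v \<noteq> 0"
  then obtain a b c e where "u = emb d a b" "v = emb d c e" by (auto simp: Qsqrt_mem)
  then show ?thesis using \<open>d > 0\<close> \<open>v \<noteq> 0\<close> by (simp add: emb_div)
qed

lemma angles_general:
  assumes d: "d > 0"
    and Lsub: "L \<subseteq> Qsqrt_neg d"
    and Lprop: "\<And>l. l \<in> L \<Longrightarrow> l \<notin> \<real> \<and> (\<exists>n>0. l^n \<in> \<real>)"
    and cover: "\<And>x y n. y \<noteq> 0 \<Longrightarrow> n > 0 \<Longrightarrow> emb d x y ^ n \<in> \<real> \<Longrightarrow>
                  \<exists>l\<in>L. \<exists>r. r \<noteq> 0 \<and> emb d x y = of_real r * l"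
  shows "angles_given_by (Qsqrt_neg d) L"
  unfolding angles_given_by_def
proof (intro allI iffI)
  fix A assume "rational_angle (Qsqrt_neg d) A"
  then obtain v1 v2 where v: "v1 \<in> Qsqrt_neg d - {0}" "v2 \<in> Qsqrt_neg d - {0}" "v2 / v1 \<notin> \<real>"
    "Arg (v2 / v1) / pi \<in> \<rat>" "A = (rline v1, rline v2)"
    unfolding rational_angle_def by blast
  have "v2 / v1 \<in> Qsqrt_neg d" using v Qsqrt_div[OF d] by blast
  then obtain x y where z: "v2 / v1 = emb d x y" by (auto simp: Qsqrt_mem)
  have y: "y \<noteq> 0" using v(3) z emb_real_iff[OF d] by auto
  have "v2 / v1 \<noteq> 0" using v by auto
  then obtain n where n: "n > 0" "(v2/v1)^n \<in> \<real>" using arg_rat_imp_pow v(4) by blast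
  then obtain l r where l: "l \<in> L" "r \<noteq> 0" "v2 / v1 = of_real r * l" using cover[OF y] z by metis
  have "v2 = of_real r * (l * v1)" using l v by (simp add: field_simps)
  then have "rline v2 = rline (l * v1)" using rline_scale l by simp
  then have "angle_equiv A (rline v1, rline (l * v1))" using v by (simp add: angle_equiv_def)
  then show "\<exists>v\<in>Qsqrt_neg d - {0}. \<exists>l\<in>L. angle_equiv A (rline v, rline (l * v))"
    using v l by blast
next
  fix A assume "\<exists>v\<in>Qsqrt_neg d - {0}. \<exists>l\<in>L. angle_equiv A (rline v, rline (l * v))"
  then obtain v l where v: "v \<in> Qsqrt_neg d" "v \<noteq> 0" and l: "l \<in> L"
    and A: "A = (rline v, rline (l * v)) \<or> A = (rline (l * v), rline v)"
    by (auto simp: angle_equiv_def)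
  have lV: "l \<in> Qsqrt_neg d" using l Lsub by blast
  have lr: "l \<notin> \<real>" and "\<exists>n>0. l^n \<in> \<real>" using Lprop[OF l] by auto
  then obtain n where n: "n > 0" "l^n \<in> \<real>" by blast
  have l0: "l \<noteq> 0" using lr by auto
  have lv: "l * v \<in> Qsqrt_neg d" "l * v \<noteq> 0" using Qsqrt_mult[OF lV v(1)] l0 v by auto
  from A show "rational_angle (Qsqrt_neg d) A"
  proof
    assume A1: "A = (rline v, rline (l * v))"
    have "l * v / v = l" using v by simp
    moreover have "Arg l / pi \<in> \<rat>" using pow_imp_arg_rat[OF l0 n] .
    ultimately show ?thesis unfolding rational_angle_def using A1 v lv lr by force
  next
    assume A2: "A = (rline (l * v), rline v)"
    have q: "v / (l * v) = inverse l" using v l0 by (simp add: field_simps)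
    have "inverse l \<notin> \<real>" using lr by (metis Reals_inverse inverse_inverse_eq)
    moreover have "inverse l ^ n \<in> \<real>" using n by (simp add: power_inverse Reals_inverse)
    then have "Arg (inverse l) / pi \<in> \<rat>" using pow_imp_arg_rat[of "inverse l" n] l0 n by simp
    ultimately show ?thesis unfolding rational_angle_def using A2 v lv q by force
  qed
qed



lemma emb_real0: "emb d x 0 \<in> \<real>"
  by (simp add: emb_def of_rat_complex)

lemma sqrt_neg_emb: "sqrt_neg d = emb d 0 1"
  by (simp add: emb_def)

lemma part2:
  assumes "d > 0" "squarefree d" "d \<noteq> 1" "d \<noteq> 3"
  shows "angles_given_by (Qsqrt_neg d) {sqrt_neg d}"
proof (rule angles_general[OF assms(1)])
  show "{sqrt_neg d} \<subseteq> Qsqrt_neg d" by (simp add: sqrt_neg_emb)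
next
  fix l assume "l \<in> {sqrt_neg d}"
  then have l: "l = emb d 0 1" by (simp add: sqrt_neg_emb)
  have "l \<notin> \<real>" using l emb_real_iff[OF assms(1)] by simp
  moreover have "l^2 \<in> \<real>" using l by (simp add: power2_eq_square emb_mult emb_real0)
  ultimately show "l \<notin> \<real> \<and> (\<exists>n>0. l^n \<in> \<real>)" by (metis zero_less_numeral)
next
  fix x y n assume "y \<noteq> 0" "0 < n" "emb d x y ^ n \<in> \<real>"
  then have "x = 0" using classify[OF assms(1,2)] assms(3,4) by blast
  then have "emb d x y = of_real (of_rat y) * sqrt_neg d" by (simp add: emb_def of_rat_complex)
  then show "\<exists>l\<in>{sqrt_neg d}. \<exists>r. r \<noteq> 0 \<and> emb d x y = of_real r * l"
    using \<open>y \<noteq> 0\<close> by (intro bexI[of _ "sqrt_neg d"] exI[of _ "of_rat y"]) auto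
qed

lemma sqrt_neg_1: "sqrt_neg 1 = \<i>" "sqrt_neg (Suc 0) = \<i>" by (simp_all add: sqrt_neg_def)

lemma part3: "angles_given_by (Qsqrt_neg 1) {\<i>, \<i> + 1, \<i> - 1}"
proof (rule angles_general)
  have e: "\<i> = emb 1 0 1" "\<i> + 1 = emb 1 1 1" "\<i> - 1 = emb 1 (-1) 1"
    by (simp_all add: emb_def sqrt_neg_1)
  define P where "P = (\<lambda>l::complex. l \<in> Qsqrt_neg 1 \<and> l \<notin> \<real> \<and> l^4 \<in> \<real>)"
  have p: "P (emb 1 0 1)" "P (emb 1 1 1)" "P (emb 1 (-1) 1)"
    unfolding P_def by (auto simp: emb_real_iff numeral_eq_Suc emb_mult)
  have "P \<i>" by (simp only: e(1) p)
  moreover have "P (\<i> + 1)" by (simp only: e(2) p)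
  moreover have "P (\<i> - 1)" by (simp only: e(3) p)
  ultimately have PL: "\<And>l. l \<in> {\<i>, \<i> + 1, \<i> - 1} \<Longrightarrow> P l" by blast
  show "{\<i>, \<i> + 1, \<i> - 1} \<subseteq> Qsqrt_neg 1" using PL P_def by blast
  fix l assume "l \<in> {\<i>, \<i> + 1, \<i> - 1}"
  then have "l \<notin> \<real> \<and> l^4 \<in> \<real>" using PL P_def by blast
  then show "l \<notin> \<real> \<and> (\<exists>n>0. l^n \<in> \<real>)" by (metis zero_less_numeral)
next
  fix x y n assume y: "y \<noteq> 0" "0 < n" "emb 1 x y ^ n \<in> \<real>"
  then have "x = 0 \<or> x = y \<or> x = -y" using classify[of 1] by auto
  moreover have "emb 1 0 y = of_real (of_rat y) * \<i>" "emb 1 y y = of_real (of_rat y) * (\<i> + 1)"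
     "emb 1 (-y) y = of_real (of_rat y) * (\<i> - 1)"
    by (simp_all add: emb_def of_rat_complex sqrt_neg_1 algebra_simps of_rat_minus)
  moreover have "of_rat y \<noteq> (0::real)" using y by auto
  ultimately show "\<exists>l\<in>{\<i>, \<i> + 1, \<i> - 1}. \<exists>r. r \<noteq> 0 \<and> emb 1 x y = of_real r * l"
    by (elim disjE) blast+
qed simp_all

lemma part4: "let \<zeta> = (-1 + sqrt_neg 3) / 2 in
            angles_given_by (Qsqrt_neg 3) {sqrt_neg 3, \<zeta>, \<zeta> - 1, \<zeta> + 1, \<zeta> + 2}"
  unfolding Let_def
proof (rule angles_general)
  have e: "sqrt_neg 3 = emb 3 0 1" "(-1 + sqrt_neg 3) / 2 = emb 3 (-1/2) (1/2)"
    "(-1 + sqrt_neg 3) / 2 - 1 = emb 3 (-3/2) (1/2)"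
    "(-1 + sqrt_neg 3) / 2 + 1 = emb 3 (1/2) (1/2)"
    "(-1 + sqrt_neg 3) / 2 + 2 = emb 3 (3/2) (1/2)"
    by (simp_all add: emb_def complex_eq_iff sqrt_neg_def of_rat_divide of_rat_minus)
  define P where "P = (\<lambda>l::complex. l \<in> Qsqrt_neg 3 \<and> l \<notin> \<real> \<and> l^6 \<in> \<real>)"
  have p: "P (emb 3 0 1)" "P (emb 3 (-1/2) (1/2))" "P (emb 3 (-3/2) (1/2))" "P (emb 3 (1/2) (1/2))"
     "P (emb 3 (3/2) (1/2))"
    unfolding P_def by (auto simp: emb_real_iff numeral_eq_Suc emb_mult)
  have "P (sqrt_neg 3)" by (simp only: e(1) p)
  moreover have "P ((-1 + sqrt_neg 3) / 2)" by (simp only: e(2) p)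
  moreover have "P ((-1 + sqrt_neg 3) / 2 - 1)" by (simp only: e(3) p)
  moreover have "P ((-1 + sqrt_neg 3) / 2 + 1)" by (simp only: e(4) p)
  moreover have "P ((-1 + sqrt_neg 3) / 2 + 2)" by (simp only: e(5) p)
  ultimately have PL: "\<And>l. l \<in> {sqrt_neg 3, (-1 + sqrt_neg 3) / 2, (-1 + sqrt_neg 3) / 2 - 1, (-1 + sqrt_neg 3) / 2 + 1,
        (-1 + sqrt_neg 3) / 2 + 2} \<Longrightarrow> P l" by blast
  show "{sqrt_neg 3, (-1 + sqrt_neg 3) / 2, (-1 + sqrt_neg 3) / 2 - 1, (-1 + sqrt_neg 3) / 2 + 1,
        (-1 + sqrt_neg 3) / 2 + 2} \<subseteq> Qsqrt_neg 3" using PL P_def by blast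
  fix l assume "l \<in> {sqrt_neg 3, (-1 + sqrt_neg 3) / 2, (-1 + sqrt_neg 3) / 2 - 1, (-1 + sqrt_neg 3) / 2 + 1,
        (-1 + sqrt_neg 3) / 2 + 2}"
  then have "l \<notin> \<real> \<and> l^6 \<in> \<real>" using PL P_def by blast
  then show "l \<notin> \<real> \<and> (\<exists>n>0. l^n \<in> \<real>)" by (metis zero_less_numeral)
next
  fix x y n assume y: "y \<noteq> 0" "0 < n" "emb 3 x y ^ n \<in> \<real>"
  then have "x = 0 \<or> x = 3*y \<or> x = -3*y \<or> x = y \<or> x = -y" using classify[of 3] squarefree_prime[of "3::nat"] by auto
  moreover have "emb 3 0 y = of_real (of_rat y) * sqrt_neg 3"
     "emb 3 (3*y) y = of_real (of_rat (2*y)) * ((-1 + sqrt_neg 3) / 2 + 2)"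
     "emb 3 (-3*y) y = of_real (of_rat (2*y)) * ((-1 + sqrt_neg 3) / 2 - 1)"
     "emb 3 y y = of_real (of_rat (2*y)) * ((-1 + sqrt_neg 3) / 2 + 1)"
     "emb 3 (-y) y = of_real (of_rat (2*y)) * ((-1 + sqrt_neg 3) / 2)"
    by (simp_all add: emb_def complex_eq_iff sqrt_neg_def of_rat_mult of_rat_minus algebra_simps)
  moreover have "of_rat (2*y) \<noteq> (0::real)" "of_rat y \<noteq> (0::real)" using y by auto
  ultimately show "\<exists>l\<in>{sqrt_neg 3, (-1 + sqrt_neg 3) / 2, (-1 + sqrt_neg 3) / 2 - 1, (-1 + sqrt_neg 3) / 2 + 1,
        (-1 + sqrt_neg 3) / 2 + 2}. \<exists>r. r \<noteq> 0 \<and> emb 3 x y = of_real r * l"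
    by (elim disjE) blast+
qed simp



lemma rat_sqf_decomp:
  fixes E :: rat assumes "E > 0"
  shows "\<exists>d f. d > 0 \<and> squarefree (d::nat) \<and> f > 0 \<and> E = of_nat d * f^2"
proof -
  obtain m n where mn: "quotient_of E = (m, n)" by force
  have n: "n > 0" using quotient_of_denom_pos[OF mn] .
  have E: "E = of_int m / of_int n" using quotient_of_div[OF mn] .
  have m: "m > 0" using assms E n by (simp add: zero_less_divide_iff)
  define N where "N = nat (m * n)"
  have N0: "N \<noteq> 0" using mult_pos_pos[OF m n] by (simp add: N_def)
  define d where "d = squarefree_part N"
  define k where "k = square_part N"
  have Nd: "N = d * k^2" using squarefree_decompose[of N] by (simp add: d_def k_def)
  have k0: "k \<noteq> 0" using N0 Nd by auto
  have d0: "d > 0" using squarefree_part_nonzero[of N] unfolding d_def by (metis gr0I)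
  have "E = of_int (m * n) / (of_int n)^2" using E n by (simp add: power2_eq_square)
  also have "of_int (m * n) = (of_nat N :: rat)" using m n by (simp add: N_def)
  also have "\<dots> = of_nat d * (of_nat k)^2" by (simp add: Nd)
  finally have "E = of_nat d * (of_nat k / of_int n)^2" by (simp add: power_divide)
  moreover have "(of_nat k / of_int n :: rat) > 0" using k0 n by simp
  ultimately show ?thesis using d0 d_def by (metis squarefree_squarefree_part)
qed

lemma Rats_complex_real: "(z::complex) \<in> \<rat> \<Longrightarrow> z \<in> \<real>"
  by (auto elim!: Rats_cases simp: of_rat_complex)

lemma part1_bwd:
  assumes "d > 0" "homothetic V (Qsqrt_neg d)"
  shows "is_CM V"
proof -
  obtain l where l: "l \<noteq> 0" "Qsqrt_neg d = (\<lambda>v. l * v) ` V" using assms(2) homothetic_def by blast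
  have "sqrt_neg d \<notin> \<real>" using emb_real_iff[OF assms(1)] by (simp add: sqrt_neg_emb)
  then have nq: "sqrt_neg d \<notin> \<rat>" using Rats_complex_real by blast
  have "(\<lambda>v. sqrt_neg d * v) ` V \<subseteq> V"
  proof
    fix z assume "z \<in> (\<lambda>v. sqrt_neg d * v) ` V"
    then obtain v where v: "v \<in> V" "z = sqrt_neg d * v" by blast
    have "l * v \<in> Qsqrt_neg d" using l v by blast
    then have "sqrt_neg d * (l * v) \<in> Qsqrt_neg d" using Qsqrt_mult[of "sqrt_neg d" d] by (simp add: sqrt_neg_emb)
    then obtain v' where "v' \<in> V" "sqrt_neg d * (l * v) = l * v'" using l by auto
    then have "z = v'" using v l by (simp add: algebra_simps)
    then show "z \<in> V" using \<open>v' \<in> V\<close> by simp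
  qed
  then show ?thesis using nq is_CM_def by blast
qed



lemma emb_add: "emb d a b + emb d c e = emb d (a + c) (b + e)"
  by (simp add: emb_def of_rat_add algebra_simps)

lemma part1_fwd:
  assumes sp: "is_space V" and cm: "is_CM V"
  shows "\<exists>d::nat. d > 0 \<and> squarefree d \<and> homothetic V (Qsqrt_neg d)"
proof -
  obtain a b where ab: "a \<in> V" "b \<in> V"
    and ind: "\<And>p q. of_rat p * a + of_rat q * b = 0 \<Longrightarrow> p = 0 \<and> q = 0"
    and V: "V = {of_rat p * a + of_rat q * b | p q :: rat. True}"
    using sp unfolding is_space_def by blast
  obtain u w where uw: "u \<in> V" "w \<in> V"
    and rind: "\<And>r s :: real. of_real r * u + of_real s * w = 0 \<Longrightarrow> r = 0 \<and> s = 0"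
    using sp unfolding is_space_def by blast
  obtain m where m: "m \<notin> \<rat>" "(\<lambda>v. m * v) ` V \<subseteq> V" using cm is_CM_def by blast
  have a0: "a \<noteq> 0" using ind[of 1 0] by auto
  have "m * a \<in> V" using m ab by blast
  then obtain p q where pq: "m * a = of_rat p * a + of_rat q * b" using V by blast
  have "m * b \<in> V" using m ab by blast
  then obtain r s where rs: "m * b = of_rat r * a + of_rat s * b" using V by blast
  define \<tau> where "\<tau> = b / a"
  have b\<tau>: "b = a * \<tau>" using a0 by (simp add: \<tau>_def)
  have "m * a = (of_rat p + of_rat q * \<tau>) * a" using pq unfolding b\<tau> by (simp add: algebra_simps)
  then have m1: "m = of_rat p + of_rat q * \<tau>" using a0 by simp
  have "(m * \<tau>) * a = (of_rat r + of_rat s * \<tau>) * a" using rs unfolding b\<tau> by (simp add: algebra_simps)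
  then have m2: "m * \<tau> = of_rat r + of_rat s * \<tau>" using a0 by simp
  have q0: "q \<noteq> 0"
  proof
    assume "q = 0" then have "m = of_rat p" using m1 by simp
    then show False using m(1) by simp
  qed
  have Vform: "\<And>v. v \<in> V \<Longrightarrow> \<exists>p1 q1. v = a * (of_rat p1 + of_rat q1 * \<tau>)"
    using V b\<tau> by (auto simp: algebra_simps)
  define X where "X = Re \<tau>"
  define Y where "Y = Im \<tau>"
  have Y0: "Y \<noteq> 0"
  proof
    assume "Y = 0"
    then have tr: "\<tau> = of_real X" by (simp add: complex_eq_iff X_def Y_def)
    have realform: "\<And>v. v \<in> V \<Longrightarrow> \<exists>t. v = a * of_real t"
    proof -
      fix v assume "v \<in> V"
      then obtain p1 q1 where "v = a * (of_rat p1 + of_rat q1 * \<tau>)" using Vform by blast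
      then have "v = a * of_real (of_rat p1 + of_rat q1 * X)" by (simp add: tr of_rat_complex)
      then show "\<exists>t. v = a * of_real t" by blast
    qed
    obtain t1 where t1: "u = a * of_real t1" using realform uw by blast
    obtain t2 where t2: "w = a * of_real t2" using realform uw by blast
    have "of_real t2 * u + of_real (- t1) * w = 0" using t1 t2 by (simp add: algebra_simps)
    then have "t2 = 0 \<and> t1 = 0" using rind by fastforce
    then have "u = 0" using t1 by simp
    then have "of_real 1 * u + of_real 0 * w = 0" by simp
    then show False using rind by fastforce
  qed
  have eq: "complex_of_real (of_rat q) * \<tau>^2 + complex_of_real (of_rat p - of_rat s) * \<tau>
      - complex_of_real (of_rat r) = 0"
    using m1 m2 by (simp add: of_rat_complex algebra_simps power2_eq_square)
  have "Im (complex_of_real (of_rat q) * \<tau>^2 + complex_of_real (of_rat p - of_rat s) * \<tau>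
      - complex_of_real (of_rat r)) = 0" by (simp only: eq) simp
  then have eqI: "real_of_rat q * (2 * X * Y) + (of_rat p - of_rat s) * Y = 0"
    by (simp add: X_def Y_def power2_eq_square algebra_simps)
  have "Re (complex_of_real (of_rat q) * \<tau>^2 + complex_of_real (of_rat p - of_rat s) * \<tau>
      - complex_of_real (of_rat r)) = 0" by (simp only: eq) simp
  then have eqR: "real_of_rat q * (X^2 - Y^2) + (of_rat p - of_rat s) * X - of_rat r = 0"
    by (simp add: X_def Y_def power2_eq_square algebra_simps)
  define X0 where "X0 = (s - p) / (2 * q)"
  have "(real_of_rat q * (2 * X) + (of_rat p - of_rat s)) * Y = 0"
    using eqI by (simp add: algebra_simps)
  then have "real_of_rat q * (2 * X) + (of_rat p - of_rat s) = 0" using Y0 by simp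
  then have X: "X = of_rat X0" using q0 by (simp add: X0_def of_rat_divide of_rat_diff of_rat_mult field_simps)
  define E where "E = X0^2 + ((p - s) * X0 - r) / q"
  have YE: "Y^2 = of_rat E"
    using eqR q0 unfolding X E_def by (simp add: of_rat_add of_rat_divide of_rat_diff of_rat_mult of_rat_power field_simps)
  have "Y^2 > 0" using Y0 by simp
  then have "E > 0" using YE by (metis zero_less_of_rat_iff)
  then obtain d f where df: "d > 0" "squarefree (d::nat)" "f > 0" "E = of_nat d * f^2"
    using rat_sqf_decomp by blast
  have "Y^2 = (of_rat f * sqrt (real d))^2" using YE df by (simp add: power_mult_distrib of_rat_mult of_rat_power)
  then have "Y = of_rat f * sqrt (real d) \<or> Y = - (of_rat f * sqrt (real d))" using power2_eq_iff by blast
  then obtain g where g: "g \<noteq> 0" "Y = of_rat g * sqrt (real d)"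
  proof
    assume "Y = of_rat f * sqrt (real d)" then show ?thesis using that[of f] df(3) by simp
  next
    assume "Y = - (of_rat f * sqrt (real d))" then show ?thesis using that[of "-f"] df(3) by (simp add: of_rat_minus)
  qed
  have \<tau>e: "\<tau> = emb d X0 g" using X g by (simp add: complex_eq_iff X_def Y_def)
  have "Qsqrt_neg d = (\<lambda>v. inverse a * v) ` V"
  proof
    show "Qsqrt_neg d \<subseteq> (\<lambda>v. inverse a * v) ` V"
    proof
      fix z assume "z \<in> Qsqrt_neg d"
      then obtain x y where z: "z = emb d x y" by (auto simp: Qsqrt_mem)
      have "emb d (x - y * X0 / g) 0 + emb d (y / g) 0 * emb d X0 g = emb d x y"
        unfolding emb_mult using g by (simp add: emb_def field_simps of_rat_add of_rat_diff of_rat_mult of_rat_divide)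
      then have "z = of_rat (x - y * X0 / g) + of_rat (y / g) * \<tau>" using z \<tau>e by (simp add: emb_def)
      then have "z = inverse a * (of_rat (x - y * X0 / g) * a + of_rat (y / g) * b)"
        using a0 b\<tau> by (simp add: field_simps)
      moreover have "of_rat (x - y * X0 / g) * a + of_rat (y / g) * b \<in> V" using V by blast
      ultimately show "z \<in> (\<lambda>v. inverse a * v) ` V" by blast
    qed
  next
    show "(\<lambda>v. inverse a * v) ` V \<subseteq> Qsqrt_neg d"
    proof
      fix z assume "z \<in> (\<lambda>v. inverse a * v) ` V"
      then obtain v where "v \<in> V" "z = inverse a * v" by blast
      then obtain p1 q1 where "v = a * (of_rat p1 + of_rat q1 * \<tau>)" using Vform by blast
      then have "z = emb d p1 0 + emb d q1 0 * emb d X0 g" using \<open>z = inverse a * v\<close> a0 \<tau>e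
        by (simp add: emb_def)
      then show "z \<in> Qsqrt_neg d" by (simp add: emb_mult emb_add)
    qed
  qed
  then have "homothetic V (Qsqrt_neg d)" unfolding homothetic_def using a0
    by (intro exI[of _ "inverse a"]) simp
  then show ?thesis using df by blast
qed


theorem theorem4p2:
  shows "(\<forall>V. is_space V \<longrightarrow>
            (is_CM V \<longleftrightarrow> (\<exists>d::nat. d > 0 \<and> squarefree d \<and> homothetic V (Qsqrt_neg d))))
       \<and> (\<forall>d::nat. d > 0 \<and> squarefree d \<and> d \<noteq> 1 \<and> d \<noteq> 3 \<longrightarrow>
            angles_given_by (Qsqrt_neg d) {sqrt_neg d})
       \<and> angles_given_by (Qsqrt_neg 1) {\<i>, \<i> + 1, \<i> - 1}
       \<and> (let \<zeta> = (-1 + sqrt_neg 3) / 2 in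
            angles_given_by (Qsqrt_neg 3) {sqrt_neg 3, \<zeta>, \<zeta> - 1, \<zeta> + 1, \<zeta> + 2})"
proof (intro conjI allI impI)
  fix V assume "is_space V"
  then show "is_CM V \<longleftrightarrow> (\<exists>d::nat. d > 0 \<and> squarefree d \<and> homothetic V (Qsqrt_neg d))"
    using part1_fwd part1_bwd by blast
next
  fix d :: nat assume "d > 0 \<and> squarefree d \<and> d \<noteq> 1 \<and> d \<noteq> 3"
  then show "angles_given_by (Qsqrt_neg d) {sqrt_neg d}" using part2 by blast
next
  show "angles_given_by (Qsqrt_neg 1) {\<i>, \<i> + 1, \<i> - 1}" by (rule part3)
next
  show "let \<zeta> = (-1 + sqrt_neg 3) / 2 in
            angles_given_by (Qsqrt_neg 3) {sqrt_neg 3, \<zeta>, \<zeta> - 1, \<zeta> + 1, \<zeta> + 2}"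
    by (rule part4)
qed

end
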